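(* In the supersample construction described in the context, for every $i=1,\dots,n$, $$I(W;R_i\mid Z_i^\pm)\le I(W;R_i\mid Z^\pm_{[n]}).$$
   Context: Let $\xi$ be a distribution on a data space $\mathcal Z$ and $P_{W|Z_{[n]}}$ a Markov kernel from $\mathcal Z^n$ to a parameter space $\mathcal W$ (a learning algorithm). Supersample construction: $Z_i^-,Z_i^+$ ($i=1,\dots,n$) are $2n$ i.i.d. samples from $\xi$, $Z_i^\pm=(Z_i^-,Z_i^+)$, $Z^\pm_{[n]}=(Z_1^\pm,\dots,Z_n^\pm)$; $R_1,\dots,R_n$ are i.i.d. uniform on $\{-1,1\}$, independent of the samples; $W$ is the output of $P_{W|Z_{[n]}}$ on the training vector $(Z_1^{R_1},\dots,Z_n^{R_n})$, where $Z_i^{1}=Z_i^+$ and $Z_i^{-1}=Z_i^-$. *)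

theory Defs
  imports "HOL-Probability.Probability"
begin

definition cond_prob :: "'a measure \<Rightarrow> 'd measure \<Rightarrow> ('a \<Rightarrow> 'd) \<Rightarrow> 'a set \<Rightarrow> 'a \<Rightarrow> real" where
  "cond_prob M MZ Z E = real_cond_exp M (vimage_algebra (space M) Z MZ) (indicator E)"

definition finite_meas_partition :: "'b measure \<Rightarrow> 'b set set \<Rightarrow> bool" where
  "finite_meas_partition MX P \<longleftrightarrow>
     finite P \<and> P \<subseteq> sets MX \<and> disjoint P \<and> \<Union>P = space MX"

definition kl_term :: "real \<Rightarrow> real \<Rightarrow> real \<Rightarrow> real" where
  "kl_term p q r = (if p \<le> 0 then 0 else p * ln (p / (q * r)))"

text \<open>Conditional mutual information I(X;Y|Z), defined in full generality as the supremum,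
  over finite measurable partitions of the ranges of X and Y, of the conditional mutual
  information of the quantised variables given Z (Dobrushin/Pinsker/Gray definition).\<close>
definition cmi :: "'a measure \<Rightarrow> 'b measure \<Rightarrow> 'c measure \<Rightarrow> 'd measure \<Rightarrow>
    ('a \<Rightarrow> 'b) \<Rightarrow> ('a \<Rightarrow> 'c) \<Rightarrow> ('a \<Rightarrow> 'd) \<Rightarrow> ennreal" where
  "cmi M MX MY MZ X Y Z =
     (SUP PQ \<in> {(P, Q). finite_meas_partition MX P \<and> finite_meas_partition MY Q}.
        \<integral>\<^sup>+ \<omega>. ennreal (\<Sum>A\<in>fst PQ. \<Sum>B\<in>snd PQ.
            kl_term (cond_prob M MZ Z {x \<in> space M. X x \<in> A \<and> Y x \<in> B} \<omega>)
                    (cond_prob M MZ Z {x \<in> space M. X x \<in> A} \<omega>)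
                    (cond_prob M MZ Z {x \<in> space M. Y x \<in> B} \<omega>)) \<partial>M)"

definition rademacher :: "int measure" where
  "rademacher = measure_pmf (pmf_of_set {-1, 1})"

definition train :: "nat set \<Rightarrow> (nat \<Rightarrow> 'z) \<Rightarrow> (nat \<Rightarrow> 'z) \<Rightarrow> (nat \<Rightarrow> int) \<Rightarrow> nat \<Rightarrow> 'z" where
  "train I zm zp r = (\<lambda>j\<in>I. if r j = 1 then zp j else zm j)"

text \<open>Joint law of (Z^-_{[n]}, Z^+_{[n]}, R_{[n]}, W): the 2n samples are iid xi, the R_j are iid
  uniform on {-1,1} independent of the samples, and W is drawn from the kernel K applied to the
  training vector.\<close>
definition supersample_law ::
    "'z measure \<Rightarrow> 'w measure \<Rightarrow> ((nat \<Rightarrow> 'z) \<Rightarrow> 'w measure) \<Rightarrow> nat \<Rightarrow>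
     ((nat \<Rightarrow> 'z) \<times> (nat \<Rightarrow> 'z) \<times> (nat \<Rightarrow> int) \<times> 'w) measure" where
  "supersample_law \<xi> MW K n =
     bind (PiM {1..n} (\<lambda>_. \<xi>) \<Otimes>\<^sub>M (PiM {1..n} (\<lambda>_. \<xi>) \<Otimes>\<^sub>M PiM {1..n} (\<lambda>_. rademacher)))
       (\<lambda>(zm, zp, r). distr (K (train {1..n} zm zp r))
          (PiM {1..n} (\<lambda>_. \<xi>) \<Otimes>\<^sub>M (PiM {1..n} (\<lambda>_. \<xi>) \<Otimes>\<^sub>M (PiM {1..n} (\<lambda>_. rademacher) \<Otimes>\<^sub>M MW)))
          (\<lambda>w. (zm, zp, r, w)))"

end

theory Submission
  imports Defs
begin


lemma ln_ge_1_minus_inv: "0 < (x::real) \<Longrightarrow> 1 - 1/x \<le> ln x"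
proof -
  assume x: "0 < x"
  have "ln (1/x) \<le> 1/x - 1" using x by (intro ln_le_minus_one) simp
  then show ?thesis using x by (simp add: ln_div)
qed

lemma kl_lower:
  fixes p q p0 q0 c :: real
  assumes "0 < c" "0 < p0" "p0 \<le> q0" "0 \<le> p" "p \<le> q"
  shows "p * (ln (p0 / (q0 * c)) + 1) - q * p0 / q0 \<le> kl_term p q c"
proof (cases "p = 0")
  case True
  then show ?thesis using assms by (simp add: kl_term_def)
next
  case False
  then have p: "0 < p" using assms by simp
  then have q: "0 < q" using assms by simp
  have q0: "0 < q0" using assms by simp
  have "1 - (q * p0) / (p * q0) \<le> ln ((p * q0) / (q * p0))"
    using ln_ge_1_minus_inv[of "(p * q0) / (q * p0)"] p q q0 assms by simp
  also have "ln ((p * q0) / (q * p0)) = ln (p / (q * c)) - ln (p0 / (q0 * c))"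
    using p q q0 assms by (simp add: ln_div ln_mult)
  finally have "p * (1 - (q * p0) / (p * q0)) \<le> p * (ln (p / (q * c)) - ln (p0 / (q0 * c)))"
    using p by (intro mult_left_mono) auto
  moreover have "p * (1 - (q * p0) / (p * q0)) = p - q * p0 / q0" using p q0 by (simp add: field_simps)
  moreover have "p * (ln (p / (q * c)) - ln (p0 / (q0 * c))) = kl_term p q c - p * ln (p0 / (q0 * c))"
    using p by (simp add: kl_term_def algebra_simps)
  ultimately show ?thesis by (simp add: algebra_simps)
qed

lemma kl_ge_lin:
  fixes p q c :: real
  assumes "0 \<le> p" "0 \<le> q" "0 \<le> c" "0 < p \<Longrightarrow> 0 < q \<and> 0 < c"
  shows "p - q * c \<le> kl_term p q c"
proof (cases "p = 0")
  case True
  then show ?thesis using assms by (simp add: kl_term_def)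
next
  case False
  then have p: "0 < p" and q: "0 < q" and c: "0 < c" using assms by auto
  have "1 - (q * c) / p \<le> ln (p / (q * c))"
    using ln_ge_1_minus_inv[of "p / (q * c)"] p q c by simp
  then have "p * (1 - (q * c) / p) \<le> p * ln (p / (q * c))"
    using p by (intro mult_left_mono) auto
  moreover have "p * (1 - (q * c) / p) = p - q * c" using p by (simp add: field_simps)
  ultimately show ?thesis using p by (simp add: kl_term_def)
qed

lemma kl_bound:
  fixes p q c :: real
  assumes "0 < c" "0 \<le> p" "p \<le> q" "q \<le> 1"
  shows "\<bar>kl_term p q c\<bar> \<le> 1 + \<bar>ln c\<bar>"
proof (cases "p = 0")
  case True
  then show ?thesis by (simp add: kl_term_def)
next
  case False
  then have p: "0 < p" and q: "0 < q" using assms by auto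
  have e: "kl_term p q c = p * ln (p / q) - p * ln c"
    using p q assms by (simp add: kl_term_def ln_div ln_mult algebra_simps)
  have a1: "p * ln (p / q) \<le> 0"
    using p q assms by (intro mult_nonneg_nonpos) auto
  have "1 - q / p \<le> ln (p / q)" using ln_ge_1_minus_inv[of "p / q"] p q by simp
  then have "p * (1 - q / p) \<le> p * ln (p / q)" using p by (intro mult_left_mono) auto
  moreover have "p * (1 - q / p) = p - q" using p by (simp add: field_simps)
  ultimately have a2: "p - q \<le> p * ln (p / q)" by simp
  have a3: "\<bar>p * ln c\<bar> \<le> \<bar>ln c\<bar>"
    using p assms by (simp add: abs_mult mult_left_le_one_le)
  show ?thesis unfolding e using a1 a2 a3 assms by linarith
qed



lemma measurable_kl_term [measurable (raw)]:
  assumes [measurable]: "f \<in> borel_measurable N" "g \<in> borel_measurable N" "h \<in> borel_measurable N"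
  shows "(\<lambda>x. kl_term (f x) (g x) (h x)) \<in> borel_measurable N"
  unfolding kl_term_def by measurable

lemma TL_pos:
  assumes sf: "sigma_finite_subalgebra M F"
    and [measurable]: "f \<in> borel_measurable F" and fpos: "\<And>x. 0 \<le> f x"
    and gi: "integrable M g" and gpos: "AE x in M. 0 \<le> g x"
    and fce: "integrable M (\<lambda>x. f x * real_cond_exp M F g x)"
  shows "integrable M (\<lambda>x. f x * g x) \<and> (\<integral>x. f x * g x \<partial>M) = (\<integral>x. f x * real_cond_exp M F g x \<partial>M)"
proof -
  interpret sigma_finite_subalgebra M F by (rule sf)
  have fM [measurable]: "f \<in> borel_measurable M" by (rule measurable_from_subalg[OF subalg]) simp
  have gM [measurable]: "g \<in> borel_measurable M" using gi by auto
  define fk where "fk = (\<lambda>(k::nat) x. min (f x) (real k))"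
  have fkF [measurable]: "fk k \<in> borel_measurable F" for k unfolding fk_def by measurable
  have fkM [measurable]: "fk k \<in> borel_measurable M" for k unfolding fk_def by measurable
  have int_k: "integrable M (\<lambda>x. fk k x * g x)" for k
  proof (rule Bochner_Integration.integrable_bound[of M "\<lambda>x. real k * g x"])
    show "integrable M (\<lambda>x. real k * g x)" using gi by auto
    show "AE x in M. norm (fk k x * g x) \<le> norm (real k * g x)"
      using fpos by (auto simp: fk_def abs_mult intro!: mult_right_mono)
  qed measurable
  have eq_k: "(\<integral>x. fk k x * g x \<partial>M) = (\<integral>x. fk k x * real_cond_exp M F g x \<partial>M)" for k
    using real_cond_exp_intg(2)[OF int_k fkF gM] by simp
  have cepos: "AE x in M. 0 \<le> real_cond_exp M F g x"
    using gpos by (intro real_cond_exp_pos) auto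
  have lim: "(\<lambda>k. fk k x) \<longlonglongrightarrow> f x" for x
  proof (rule tendsto_eventually)
    obtain N :: nat where "f x \<le> real N" using real_arch_simple by blast
    then show "\<forall>\<^sub>F k in sequentially. fk k x = f x"
      unfolding fk_def eventually_sequentially
      by (intro exI[of _ N]) (auto intro: order_trans)
  qed
  have ilim: "(\<lambda>k. \<integral>x. fk k x * g x \<partial>M) \<longlonglongrightarrow> (\<integral>x. f x * real_cond_exp M F g x \<partial>M)"
    unfolding eq_k
  proof (rule integral_dominated_convergence[where w="\<lambda>x. norm (f x * real_cond_exp M F g x)"])
    show "integrable M (\<lambda>x. norm (f x * real_cond_exp M F g x))" using fce by auto
    show "AE x in M. (\<lambda>k. fk k x * real_cond_exp M F g x) \<longlonglongrightarrow> f x * real_cond_exp M F g x"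
      using lim by (auto intro!: tendsto_mult)
    show "AE x in M. norm (fk k x * real_cond_exp M F g x) \<le> norm (f x * real_cond_exp M F g x)" for k
      using fpos by (auto simp: fk_def abs_mult intro!: mult_right_mono)
  qed measurable
  have "integrable M (\<lambda>x. f x * g x) \<and> (\<integral>x. f x * g x \<partial>M) = (\<integral>x. f x * real_cond_exp M F g x \<partial>M)"
  proof (intro conjI)
    have mono: "AE x in M. mono (\<lambda>k. fk k x * g x)"
      using gpos by eventually_elim (auto simp: mono_def fk_def intro!: mult_right_mono)
    have pos: "AE x in M. 0 \<le> fk k x * g x" for k
      using gpos by eventually_elim (simp add: fk_def fpos)
    have lim2: "AE x in M. (\<lambda>k. fk k x * g x) \<longlonglongrightarrow> f x * g x"
      using lim by (auto intro!: tendsto_mult)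
    show "integrable M (\<lambda>x. f x * g x)"
      by (rule integral_monotone_convergence_nonneg(1)[OF int_k mono pos lim2 ilim]) measurable
    show "(\<integral>x. f x * g x \<partial>M) = (\<integral>x. f x * real_cond_exp M F g x \<partial>M)"
      by (rule integral_monotone_convergence_nonneg(2)[OF int_k mono pos lim2 ilim]) measurable
  qed
  then show ?thesis .
qed

lemma TL:
  assumes sf: "sigma_finite_subalgebra M F"
    and [measurable]: "f \<in> borel_measurable F"
    and gi: "integrable M g" and gpos: "AE x in M. 0 \<le> g x"
    and fce: "integrable M (\<lambda>x. f x * real_cond_exp M F g x)"
  shows "integrable M (\<lambda>x. f x * g x) \<and> (\<integral>x. f x * g x \<partial>M) = (\<integral>x. f x * real_cond_exp M F g x \<partial>M)"
proof -
  interpret sigma_finite_subalgebra M F by (rule sf)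
  have fM [measurable]: "f \<in> borel_measurable M" by (rule measurable_from_subalg[OF subalg]) simp
  have gM [measurable]: "g \<in> borel_measurable M" using gi by auto
  define f1 where "f1 = (\<lambda>x. max (f x) 0)"
  define f2 where "f2 = (\<lambda>x. max (- f x) 0)"
  have [measurable]: "f1 \<in> borel_measurable F" "f2 \<in> borel_measurable F"
    unfolding f1_def f2_def by measurable
  have fce1: "integrable M (\<lambda>x. f1 x * real_cond_exp M F g x)"
    by (rule Bochner_Integration.integrable_bound[OF fce]) (auto simp: f1_def abs_mult intro!: mult_right_mono)
  have fce2: "integrable M (\<lambda>x. f2 x * real_cond_exp M F g x)"
    by (rule Bochner_Integration.integrable_bound[OF fce]) (auto simp: f2_def abs_mult intro!: mult_right_mono)

  have r1: "integrable M (\<lambda>x. f1 x * g x) \<and> (\<integral>x. f1 x * g x \<partial>M) = (\<integral>x. f1 x * real_cond_exp M F g x \<partial>M)"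
    by (rule TL_pos[OF sf _ _ gi gpos fce1]) (auto simp: f1_def)
  have r2: "integrable M (\<lambda>x. f2 x * g x) \<and> (\<integral>x. f2 x * g x \<partial>M) = (\<integral>x. f2 x * real_cond_exp M F g x \<partial>M)"
    by (rule TL_pos[OF sf _ _ gi gpos fce2]) (auto simp: f2_def)
  have fe: "f x = f1 x - f2 x" for x by (auto simp: f1_def f2_def)
  have e1: "(\<lambda>x. f x * g x) = (\<lambda>x. f1 x * g x - f2 x * g x)" by (auto simp: fe algebra_simps)
  have e2: "(\<lambda>x. f x * real_cond_exp M F g x) = (\<lambda>x. f1 x * real_cond_exp M F g x - f2 x * real_cond_exp M F g x)"
    by (auto simp: fe algebra_simps)
  show ?thesis unfolding e1 e2 using r1 r2 fce1 fce2 by simp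
qed



lemma aux_frac_bound: "0 < (a::real) \<Longrightarrow> a \<le> b \<Longrightarrow> 0 \<le> q \<Longrightarrow> q \<le> 1 \<Longrightarrow> \<bar>a / b * q\<bar> \<le> 1"
proof -
  assume h: "0 < a" "a \<le> b" "0 \<le> q" "q \<le> 1"
  then have "a / b \<le> 1" "0 \<le> a / b" by auto
  then have "a / b * q \<le> 1" using h by (intro mult_le_one) auto
  then show ?thesis using h by simp
qed

lemma PP:
  assumes ps: "prob_space M" and sf: "sigma_finite_subalgebra M G"
    and [measurable]: "p \<in> borel_measurable M" "q \<in> borel_measurable M"
      "p' \<in> borel_measurable G" "q' \<in> borel_measurable G"
    and ae: "AE x in M. 0 \<le> p x \<and> p x \<le> q x \<and> q x \<le> 1 \<and> p x \<le> c"
      "AE x in M. 0 \<le> p' x \<and> p' x \<le> q' x \<and> q' x \<le> 1 \<and> p' x \<le> c"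
    and cep: "AE x in M. real_cond_exp M G p x = p' x"
    and ceq: "AE x in M. real_cond_exp M G q x = q' x"
    and c: "0 \<le> c"
  shows "integrable M (\<lambda>x. kl_term (p' x) (q' x) c)"
    "integrable M (\<lambda>x. kl_term (p x) (q x) c)"
    "(\<integral>x. kl_term (p' x) (q' x) c \<partial>M) \<le> (\<integral>x. kl_term (p x) (q x) c \<partial>M)"
proof -
  interpret prob_space M by (rule ps)
  interpret S: sigma_finite_subalgebra M G by (rule sf)
  have [measurable]: "p' \<in> borel_measurable M" "q' \<in> borel_measurable M"
    by (rule measurable_from_subalg[OF S.subalg], simp)+
  have "integrable M (\<lambda>x. kl_term (p' x) (q' x) c) \<and> integrable M (\<lambda>x. kl_term (p x) (q x) c) \<and>
    (\<integral>x. kl_term (p' x) (q' x) c \<partial>M) \<le> (\<integral>x. kl_term (p x) (q x) c \<partial>M)"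
  proof (cases "c = 0")
    case True
    have z1: "AE x in M. kl_term (p x) (q x) c = 0"
      using ae(1) by eventually_elim (auto simp: kl_term_def True)
    have z2: "AE x in M. kl_term (p' x) (q' x) c = 0"
      using ae(2) by eventually_elim (auto simp: kl_term_def True)
    have i1: "integrable M (\<lambda>x. kl_term (p x) (q x) c)"
      by (rule integrable_cong_AE_imp[of _ "\<lambda>_. 0"]) (use z1 in auto)
    have i2: "integrable M (\<lambda>x. kl_term (p' x) (q' x) c)"
      by (rule integrable_cong_AE_imp[of _ "\<lambda>_. 0"]) (use z2 in auto)
    have "(\<integral>x. kl_term (p x) (q x) c \<partial>M) = 0"
      using integral_cong_AE[OF _ _ z1] by simp
    moreover have "(\<integral>x. kl_term (p' x) (q' x) c \<partial>M) = 0"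
      using integral_cong_AE[OF _ _ z2] by simp
    ultimately show ?thesis using i1 i2 by simp
  next
    case False
    then have c0: "0 < c" using c by simp
    have iH: "integrable M (\<lambda>x. kl_term (p x) (q x) c)"
      by (rule integrable_const_bound[where B="1 + \<bar>ln c\<bar>"])
         (use ae(1) in \<open>auto intro!: kl_bound c0\<close>)
    have iG: "integrable M (\<lambda>x. kl_term (p' x) (q' x) c)"
      by (rule integrable_const_bound[where B="1 + \<bar>ln c\<bar>"])
         (use ae(2) in \<open>auto intro!: kl_bound c0\<close>)
    have ip: "integrable M p"
      by (rule integrable_const_bound[where B=1]) (use ae(1) in auto)
    have iq: "integrable M q"
      by (rule integrable_const_bound[where B=1]) (use ae(1) in auto)
    define f1 where "f1 = (\<lambda>x. if 0 < p' x then ln (p' x / (q' x * c)) + 1 else 0)"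
    define f2 where "f2 = (\<lambda>x. if 0 < p' x then p' x / q' x else 0)"
    have [measurable]: "f1 \<in> borel_measurable G" "f2 \<in> borel_measurable G"
      unfolding f1_def f2_def by measurable
    have [measurable]: "f1 \<in> borel_measurable M" "f2 \<in> borel_measurable M"
      by (rule measurable_from_subalg[OF S.subalg], simp)+
    define g where "g = (\<lambda>x. f1 x * p x - f2 x * q x)"
    \<comment> \<open>p vanishes where p' does\<close>
    define h where "h = (\<lambda>x. if p' x \<le> 0 then 1 else (0::real))"
    have [measurable]: "h \<in> borel_measurable G" unfolding h_def by measurable
    have [measurable]: "h \<in> borel_measurable M"
      by (rule measurable_from_subalg[OF S.subalg], simp)
    have ihp: "integrable M (\<lambda>x. h x * p x)"
      by (rule integrable_const_bound[where B=1]) (use ae(1) in \<open>auto simp: h_def\<close>)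
    have "(\<integral>x. h x * p x \<partial>M) = (\<integral>x. h x * real_cond_exp M G p x \<partial>M)"
      using S.real_cond_exp_intg(2)[OF ihp] by simp
    also have "\<dots> = (\<integral>x. h x * p' x \<partial>M)"
      by (rule integral_cong_AE) (use cep in auto)
    also have "\<dots> = 0"
      by (rule integral_eq_zero_AE) (use ae(2) in \<open>auto simp: h_def\<close>)
    finally have "(\<integral>x. h x * p x \<partial>M) = 0" .
    moreover have nn: "AE x in M. 0 \<le> h x * p x" using ae(1) by eventually_elim (auto simp: h_def)
    ultimately have "AE x in M. h x * p x = 0"
      using integral_nonneg_eq_0_iff_AE[OF ihp nn] by simp
    then have Z: "AE x in M. p' x \<le> 0 \<longrightarrow> p x = 0"
      by eventually_elim (auto simp: h_def)
    have gle: "AE x in M. g x \<le> kl_term (p x) (q x) c"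
      using ae(1) ae(2) Z
    proof eventually_elim
      case (elim x)
      show ?case
      proof (cases "0 < p' x")
        case True
        then show ?thesis using kl_lower[OF c0 True, of "q' x" "p x" "q x"] elim
          by (simp add: g_def f1_def f2_def mult.commute)
      next
        case False
        then show ?thesis using elim by (simp add: g_def f1_def f2_def kl_term_def)
      qed
    qed
    have f1p': "AE x in M. f1 x * p' x = kl_term (p' x) (q' x) c + (if 0 < p' x then p' x else 0)"
      using ae(2) by eventually_elim (auto simp: f1_def kl_term_def algebra_simps)
    have if1p': "integrable M (\<lambda>x. f1 x * p' x)"
    proof (rule integrable_cong_AE_imp)
      show "(\<lambda>x. f1 x * p' x) \<in> borel_measurable M" by measurable
      show "AE x in M. kl_term (p' x) (q' x) c + (if 0 < p' x then p' x else 0) = f1 x * p' x"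
        using f1p' by auto
      show "integrable M (\<lambda>x. kl_term (p' x) (q' x) c + (if 0 < p' x then p' x else 0))"
        by (intro Bochner_Integration.integrable_add iG integrable_const_bound[where B=1])
           (use ae(2) in auto)
    qed
    have if1ce: "integrable M (\<lambda>x. f1 x * real_cond_exp M G p x)"
      by (rule integrable_cong_AE_imp[OF if1p']) (use cep in auto)
    have T: "integrable M (\<lambda>x. f1 x * p x) \<and> (\<integral>x. f1 x * p x \<partial>M) = (\<integral>x. f1 x * real_cond_exp M G p x \<partial>M)"
      by (rule TL[OF sf _ ip _ if1ce]) (use ae(1) in auto)
    have "AE x in M. norm (f2 x * q x) \<le> 1" using ae(1) ae(2)
    proof eventually_elim
      case (elim x) then show ?case
        using aux_frac_bound[of "p' x" "q' x" "q x"] by (cases "0 < p' x") (simp_all add: f2_def)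
    qed
    then have if2q: "integrable M (\<lambda>x. f2 x * q x)"
      by (intro integrable_const_bound[where B=1]) auto
    have ig: "integrable M g" unfolding g_def using T if2q by auto
    have "(\<integral>x. g x \<partial>M) = (\<integral>x. f1 x * p x \<partial>M) - (\<integral>x. f2 x * q x \<partial>M)"
      unfolding g_def using T if2q by simp
    also have "(\<integral>x. f1 x * p x \<partial>M) = (\<integral>x. f1 x * p' x \<partial>M)"
      using T by (simp add: integral_cong_AE[OF _ _ cep[THEN AE_mp, OF AE_I2, OF impI]])
    also have "(\<integral>x. f2 x * q x \<partial>M) = (\<integral>x. f2 x * real_cond_exp M G q x \<partial>M)"
      using S.real_cond_exp_intg(2)[OF if2q] by simp
    also have "\<dots> = (\<integral>x. f2 x * q' x \<partial>M)"
      by (rule integral_cong_AE) (use ceq in auto)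
    also have "(\<integral>x. f1 x * p' x \<partial>M) - (\<integral>x. f2 x * q' x \<partial>M) = (\<integral>x. f1 x * p' x - f2 x * q' x \<partial>M)"
    proof (rule Bochner_Integration.integral_diff[symmetric, OF if1p'])
      show "integrable M (\<lambda>x. f2 x * q' x)"
        by (rule integrable_const_bound[where B=1]) (use ae(2) in \<open>auto simp: f2_def abs_mult\<close>)
    qed
    also have "\<dots> = (\<integral>x. kl_term (p' x) (q' x) c \<partial>M)"
      by (rule integral_cong_AE) (use ae(2) in \<open>auto simp: f1_def f2_def kl_term_def algebra_simps\<close>)
    finally have "(\<integral>x. g x \<partial>M) = (\<integral>x. kl_term (p' x) (q' x) c \<partial>M)" .
    moreover have "(\<integral>x. g x \<partial>M) \<le> (\<integral>x. kl_term (p x) (q x) c \<partial>M)"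
      by (rule integral_mono_AE[OF ig iH gle])
    ultimately show ?thesis using iG iH by simp
  qed
  then show "integrable M (\<lambda>x. kl_term (p' x) (q' x) c)"
    "integrable M (\<lambda>x. kl_term (p x) (q x) c)"
    "(\<integral>x. kl_term (p' x) (q' x) c \<partial>M) \<le> (\<integral>x. kl_term (p x) (q x) c \<partial>M)" by auto
qed



lemma sfs: "prob_space M \<Longrightarrow> subalgebra M F \<Longrightarrow> sigma_finite_subalgebra M F"
  by (intro finite_measure_subalgebra_is_sigma_finite)
     (auto simp: finite_measure_subalgebra_def finite_measure_subalgebra_axioms_def prob_space_def)

lemma ce_basic:
  assumes ps: "prob_space M" and sub: "subalgebra M F" and E: "E1 \<in> sets M" "E2 \<in> sets M" "E1 \<subseteq> E2"
  shows "AE x in M. 0 \<le> real_cond_exp M F (indicator E1) x \<and>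
     real_cond_exp M F (indicator E1) x \<le> real_cond_exp M F (indicator E2) x \<and>
     real_cond_exp M F (indicator E2) x \<le> 1"
proof -
  interpret prob_space M by (rule ps)
  interpret sigma_finite_subalgebra M F by (rule sfs[OF ps sub])
  have i1: "integrable M (indicator E1 :: 'a \<Rightarrow> real)"
    by (rule integrable_real_indicator[OF E(1)]) (simp add: less_top[symmetric])
  have i2: "integrable M (indicator E2 :: 'a \<Rightarrow> real)"
    by (rule integrable_real_indicator[OF E(2)]) (simp add: less_top[symmetric])
  have a: "AE x in M. 0 \<le> real_cond_exp M F (indicator E1) x"
    by (rule real_cond_exp_pos) (use E in auto)
  have b: "AE x in M. real_cond_exp M F (indicator E1) x \<le> real_cond_exp M F (indicator E2) x"
    by (rule real_cond_exp_mono[OF _ i1 i2]) (use E in \<open>auto simp: indicator_def\<close>)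
  have c: "AE x in M. real_cond_exp M F (indicator E2) x \<le> 1"
    by (rule real_cond_exp_le_c[OF i2]) (auto simp: indicator_def)
  show ?thesis using a b c by eventually_elim auto
qed

lemma ce_indep:
  assumes ps: "prob_space M" and sub: "subalgebra M F" and E: "E \<in> sets M"
    and ind: "\<And>A. A \<in> sets F \<Longrightarrow> measure M (A \<inter> E) = measure M A * measure M E"
  shows "AE x in M. real_cond_exp M F (indicator E) x = measure M E"
proof -
  interpret prob_space M by (rule ps)
  interpret sigma_finite_subalgebra M F by (rule sfs[OF ps sub])
  show ?thesis
  proof (rule real_cond_exp_charact)
    fix A assume A: "A \<in> sets F"
    then have AM: "A \<in> sets M" using sub by (auto simp: subalgebra_def)
    have "(\<integral>x\<in>A. indicator E x \<partial>M) = (\<integral>x. indicator (A \<inter> E) x \<partial>M)"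
      unfolding set_lebesgue_integral_def by (intro Bochner_Integration.integral_cong) (auto simp: indicator_def)
    also have "\<dots> = measure M (A \<inter> E)" using AM E by (simp add: Int_absorb2 sets.sets_into_space Int_assoc)
    also have "\<dots> = measure M A * measure M E" by (rule ind[OF A])
    also have "\<dots> = (\<integral>x\<in>A. measure M E \<partial>M)" using AM by (simp add: set_integral_const)
    finally show "(\<integral>x\<in>A. indicator E x \<partial>M) = (\<integral>x\<in>A. measure M E \<partial>M)" .
  qed (use E in \<open>auto intro!: integrable_real_indicator simp: less_top[symmetric]\<close>)
qed



lemma ennreal_int_le_nn:
  fixes f :: "'a \<Rightarrow> real"
  assumes "integrable M f"
  shows "ennreal (\<integral>x. f x \<partial>M) \<le> (\<integral>\<^sup>+x. ennreal (f x) \<partial>M)"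
proof -
  have i: "integrable M (\<lambda>x. max (f x) 0)" using assms by auto
  have "(\<integral>x. f x \<partial>M) \<le> (\<integral>x. max (f x) 0 \<partial>M)"
    by (rule integral_mono[OF assms i]) auto
  then have "ennreal (\<integral>x. f x \<partial>M) \<le> ennreal (\<integral>x. max (f x) 0 \<partial>M)" by (rule ennreal_leI)
  also have "\<dots> = (\<integral>\<^sup>+x. ennreal (max (f x) 0) \<partial>M)"
    by (rule nn_integral_eq_integral[OF i, symmetric]) auto
  also have "\<dots> = (\<integral>\<^sup>+x. ennreal (f x) \<partial>M)"
    by (intro nn_integral_cong) (auto simp: max_def ennreal_neg)
  finally show ?thesis .
qed

lemma kl_sum_nonneg:
  fixes p :: "'x \<Rightarrow> 'y \<Rightarrow> real" and q :: "'x \<Rightarrow> real" and c :: "'y \<Rightarrow> real"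
  assumes "\<And>A B. A \<in> P \<Longrightarrow> B \<in> Q \<Longrightarrow> 0 \<le> p A B \<and> p A B \<le> q A \<and> p A B \<le> c B"
    and "\<And>A. A \<in> P \<Longrightarrow> 0 \<le> q A" and "\<And>B. B \<in> Q \<Longrightarrow> 0 \<le> c B"
    and "(\<Sum>B\<in>Q. c B) = 1" and "\<And>A. A \<in> P \<Longrightarrow> (\<Sum>B\<in>Q. p A B) = q A"
  shows "0 \<le> (\<Sum>A\<in>P. \<Sum>B\<in>Q. kl_term (p A B) (q A) (c B))"
proof -
  have "(\<Sum>A\<in>P. \<Sum>B\<in>Q. p A B - q A * c B) \<le> (\<Sum>A\<in>P. \<Sum>B\<in>Q. kl_term (p A B) (q A) (c B))"
  proof (intro sum_mono kl_ge_lin)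
    fix A B assume AB: "A \<in> P" "B \<in> Q"
    show "0 \<le> p A B" "0 \<le> q A" "0 \<le> c B" using assms(1)[OF AB] assms(2)[OF AB(1)] assms(3)[OF AB(2)] by auto
    show "0 < p A B \<Longrightarrow> 0 < q A \<and> 0 < c B" using assms(1)[OF AB] by auto
  qed
  moreover have "(\<Sum>A\<in>P. \<Sum>B\<in>Q. p A B - q A * c B) = 0"
  proof (rule sum.neutral, rule ballI)
    fix A assume A: "A \<in> P"
    have "(\<Sum>B\<in>Q. p A B - q A * c B) = (\<Sum>B\<in>Q. p A B) - q A * (\<Sum>B\<in>Q. c B)"
      by (simp add: sum_subtractf sum_distrib_left)
    also have "\<dots> = 0" using assms(4) assms(5)[OF A] by simp
    finally show "(\<Sum>B\<in>Q. p A B - q A * c B) = 0" .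
  qed
  ultimately show ?thesis by simp
qed

lemma core_term:
  assumes ps: "prob_space M" and subG: "subalgebra M G" and subH: "subalgebra M H"
    and GH: "sets G \<subseteq> sets H"
    and X[measurable]: "X \<in> measurable M MX" and Y[measurable]: "Y \<in> measurable M MY"
    and P: "finite_meas_partition MX P" and Q: "finite_meas_partition MY Q"
    and ind: "\<And>A B. A \<in> sets H \<Longrightarrow> B \<in> sets MY \<Longrightarrow>
       measure M (A \<inter> {x\<in>space M. Y x \<in> B}) = measure M A * measure M {x\<in>space M. Y x \<in> B}"
  shows "(\<integral>\<^sup>+ \<omega>. ennreal (\<Sum>A\<in>P. \<Sum>B\<in>Q.
            kl_term (real_cond_exp M G (indicator {x \<in> space M. X x \<in> A \<and> Y x \<in> B}) \<omega>)
                    (real_cond_exp M G (indicator {x \<in> space M. X x \<in> A}) \<omega>)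
                    (real_cond_exp M G (indicator {x \<in> space M. Y x \<in> B}) \<omega>)) \<partial>M)
    \<le> (\<integral>\<^sup>+ \<omega>. ennreal (\<Sum>A\<in>P. \<Sum>B\<in>Q.
            kl_term (real_cond_exp M H (indicator {x \<in> space M. X x \<in> A \<and> Y x \<in> B}) \<omega>)
                    (real_cond_exp M H (indicator {x \<in> space M. X x \<in> A}) \<omega>)
                    (real_cond_exp M H (indicator {x \<in> space M. Y x \<in> B}) \<omega>)) \<partial>M)"
proof -
  interpret prob_space M by (rule ps)
  interpret SG: sigma_finite_subalgebra M G by (rule sfs[OF ps subG])
  interpret SH: sigma_finite_subalgebra M H by (rule sfs[OF ps subH])
  define EA where "EA A = {x \<in> space M. X x \<in> A}" for A
  define EB where "EB B = {x \<in> space M. Y x \<in> B}" for B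
  define EAB where "EAB A B = {x \<in> space M. X x \<in> A \<and> Y x \<in> B}" for A B
  define ce where "ce F E = real_cond_exp M F (indicator E)" for F E
  define c where "c B = measure M (EB B)" for B
  have Pf: "finite P" "P \<subseteq> sets MX" "disjoint P" "\<Union>P = space MX"
    using P by (auto simp: finite_meas_partition_def)
  have Qf: "finite Q" "Q \<subseteq> sets MY" "disjoint Q" "\<Union>Q = space MY"
    using Q by (auto simp: finite_meas_partition_def)
  have EA_sets: "EA A \<in> sets M" if "A \<in> sets MX" for A
    unfolding EA_def using measurable_sets[OF X that] by (simp add: vimage_def Int_def conj_commute)
  have EB_sets: "EB B \<in> sets M" if "B \<in> sets MY" for B
    unfolding EB_def using measurable_sets[OF Y that] by (simp add: vimage_def Int_def conj_commute)
  have EAB_sets: "EAB A B \<in> sets M" if "A \<in> sets MX" "B \<in> sets MY" for A B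
  proof -
    have "EAB A B = EA A \<inter> EB B" by (auto simp: EAB_def EA_def EB_def)
    then show ?thesis using EA_sets[OF that(1)] EB_sets[OF that(2)] by auto
  qed
  have subHG: "subalgebra H G"
    using subG subH GH by (auto simp: subalgebra_def)
  have indF: "AE x in M. ce F (EB B) x = c B"
    if F: "subalgebra M F" "sets F \<subseteq> sets H" and B: "B \<in> sets MY" for F B
    unfolding ce_def c_def
    by (rule ce_indep[OF ps F(1) EB_sets[OF B]]) (use F B in \<open>auto simp: EB_def intro!: ind\<close>)
  have indH: "AE x in M. ce H (EB B) x = c B" if "B \<in> Q" for B
    using indF[OF subH _ ] that Qf by auto
  have indG: "AE x in M. ce G (EB B) x = c B" if "B \<in> Q" for B
    using indF[OF subG GH] that Qf by auto
  have nested: "AE x in M. real_cond_exp M G (ce H E) x = ce G E x" if "E \<in> sets M" for E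
    unfolding ce_def
    by (rule SG.real_cond_exp_nested_subalg[OF subH subHG])
       (use that in \<open>auto intro!: integrable_real_indicator simp: less_top[symmetric]\<close>)
  have ceGM [measurable]: "ce F E \<in> borel_measurable M" for F E unfolding ce_def by simp
  have ceGF [measurable]: "ce F E \<in> borel_measurable F" for F E unfolding ce_def by simp
  have basic: "AE x in M. 0 \<le> ce F E1 x \<and> ce F E1 x \<le> ce F E2 x \<and> ce F E2 x \<le> 1"
    if "subalgebra M F" "E1 \<in> sets M" "E2 \<in> sets M" "E1 \<subseteq> E2" for F E1 E2
    unfolding ce_def by (rule ce_basic[OF ps that])
  have aeF: "AE x in M. (0 \<le> ce F (EAB A B) x \<and> ce F (EAB A B) x \<le> ce F (EA A) x \<and> ce F (EA A) x \<le> 1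
       \<and> ce F (EAB A B) x \<le> c B) \<and> ce F (EB B) x = c B"
    if F: "subalgebra M F" "sets F \<subseteq> sets H" and AB: "A \<in> P" "B \<in> Q" for F A B
  proof -
    have A: "A \<in> sets MX" and B: "B \<in> sets MY" using AB Pf Qf by auto
    have s1: "EAB A B \<subseteq> EA A" "EAB A B \<subseteq> EB B" by (auto simp: EAB_def EA_def EB_def)
    note b1 = basic[OF F(1) EAB_sets[OF A B] EA_sets[OF A] s1(1)]
    note b2 = basic[OF F(1) EAB_sets[OF A B] EB_sets[OF B] s1(2)]
    note i = indF[OF F B]
    show ?thesis using b1 b2 i by eventually_elim auto
  qed
  define KG where "KG A B \<omega> = kl_term (ce G (EAB A B) \<omega>) (ce G (EA A) \<omega>) (ce G (EB B) \<omega>)" for A B \<omega>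
  define KH where "KH A B \<omega> = kl_term (ce H (EAB A B) \<omega>) (ce H (EA A) \<omega>) (ce H (EB B) \<omega>)" for A B \<omega>
  define KG' where "KG' A B \<omega> = kl_term (ce G (EAB A B) \<omega>) (ce G (EA A) \<omega>) (c B)" for A B \<omega>
  define KH' where "KH' A B \<omega> = kl_term (ce H (EAB A B) \<omega>) (ce H (EA A) \<omega>) (c B)" for A B \<omega>
  have [measurable]: "KG A B \<in> borel_measurable M" "KH A B \<in> borel_measurable M"
    "KG' A B \<in> borel_measurable M" "KH' A B \<in> borel_measurable M" for A B
    unfolding KG_def KH_def KG'_def KH'_def by measurable
  have pp: "integrable M (KG A B) \<and> integrable M (KH A B) \<and> (\<integral>x. KG A B x \<partial>M) \<le> (\<integral>x. KH A B x \<partial>M)"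
    if AB: "A \<in> P" "B \<in> Q" for A B
  proof -
    have A: "A \<in> sets MX" and B: "B \<in> sets MY" using AB Pf Qf by auto
    note aH = aeF[OF subH order_refl AB]
    note aG = aeF[OF subG GH AB]
    have r: "integrable M (KG' A B)" "integrable M (KH' A B)" "(\<integral>x. KG' A B x \<partial>M) \<le> (\<integral>x. KH' A B x \<partial>M)"
      unfolding KG'_def KH'_def
      by (rule PP[OF ps sfs[OF ps subG] ceGM ceGM ceGF ceGF _ _ nested[OF EAB_sets[OF A B]]
            nested[OF EA_sets[OF A]]], (use aH aG in \<open>auto simp: c_def\<close>))+
    have eG: "AE x in M. KG A B x = KG' A B x" using aG by eventually_elim (auto simp: KG_def KG'_def)
    have eH: "AE x in M. KH A B x = KH' A B x" using aH by eventually_elim (auto simp: KH_def KH'_def)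
    have "integrable M (KG A B)" by (rule integrable_cong_AE_imp[OF r(1)]) (use eG in auto)
    moreover have "integrable M (KH A B)" by (rule integrable_cong_AE_imp[OF r(2)]) (use eH in auto)
    moreover have "(\<integral>x. KG A B x \<partial>M) = (\<integral>x. KG' A B x \<partial>M)" by (rule integral_cong_AE) (use eG in auto)
    moreover have "(\<integral>x. KH A B x \<partial>M) = (\<integral>x. KH' A B x \<partial>M)" by (rule integral_cong_AE) (use eH in auto)
    ultimately show ?thesis using r(3) by simp
  qed
  have iSG: "integrable M (\<lambda>\<omega>. \<Sum>A\<in>P. \<Sum>B\<in>Q. KG A B \<omega>)"
    using pp by (intro Bochner_Integration.integrable_sum) auto
  have iSH: "integrable M (\<lambda>\<omega>. \<Sum>A\<in>P. \<Sum>B\<in>Q. KH A B \<omega>)"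
    using pp by (intro Bochner_Integration.integrable_sum) auto
  have "(\<integral>\<omega>. (\<Sum>A\<in>P. \<Sum>B\<in>Q. KG A B \<omega>) \<partial>M) = (\<Sum>A\<in>P. \<Sum>B\<in>Q. (\<integral>\<omega>. KG A B \<omega> \<partial>M))"
    using pp by (subst Bochner_Integration.integral_sum, (auto intro!: Bochner_Integration.integrable_sum)[1],
      intro sum.cong refl Bochner_Integration.integral_sum) auto
  also have "\<dots> \<le> (\<Sum>A\<in>P. \<Sum>B\<in>Q. (\<integral>\<omega>. KH A B \<omega> \<partial>M))"
    using pp by (intro sum_mono) auto
  also have "\<dots> = (\<integral>\<omega>. (\<Sum>A\<in>P. \<Sum>B\<in>Q. KH A B \<omega>) \<partial>M)"
    using pp by (subst Bochner_Integration.integral_sum, (auto intro!: Bochner_Integration.integrable_sum)[1],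
      intro sum.cong refl Bochner_Integration.integral_sum[symmetric]) auto
  finally have intle: "(\<integral>\<omega>. (\<Sum>A\<in>P. \<Sum>B\<in>Q. KG A B \<omega>) \<partial>M) \<le> (\<integral>\<omega>. (\<Sum>A\<in>P. \<Sum>B\<in>Q. KH A B \<omega>) \<partial>M)" .
  have sumc: "(\<Sum>B\<in>Q. c B) = 1"
  proof -
    have "(\<Sum>B\<in>Q. c B) = measure M (\<Union>B\<in>Q. EB B)"
      unfolding c_def
    proof (rule finite_measure_finite_Union[symmetric])
      show "finite Q" by (rule Qf(1))
      show "EB ` Q \<subseteq> sets M" using Qf EB_sets by auto
      show "disjoint_family_on EB Q"
        using Qf(3) unfolding disjoint_family_on_def disjoint_def EB_def by blast
    qed
    also have "(\<Union>B\<in>Q. EB B) = space M"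
      using Qf(4) measurable_space[OF Y] by (auto simp: EB_def)
    finally show ?thesis by (simp add: prob_space)
  qed
  have sumA: "AE x in M. (\<Sum>B\<in>Q. ce G (EAB A B) x) = ce G (EA A) x" if A: "A \<in> P" for A
  proof -
    define f where "f B = (if B \<in> Q then indicator (EAB A B) else (\<lambda>_. 0::real))" for B
    have fi: "integrable M (f B)" for B
    proof (cases "B \<in> Q")
      case True
      then have "EAB A B \<in> sets M" using A Pf Qf by (intro EAB_sets) auto
      then show ?thesis using True by (auto simp: f_def less_top[symmetric])
    next
      case False
      then show ?thesis by (simp add: f_def)
    qed
    have fsum: "(\<lambda>x. \<Sum>B\<in>Q. f B x) = indicator (EA A)"
    proof
      fix x
      have "(\<Sum>B\<in>Q. f B x) = (\<Sum>B\<in>Q. indicator (EAB A B) x)" by (simp add: f_def)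
      also have "\<dots> = indicator (\<Union>(EAB A ` Q)) x"
        by (rule indicator_UN_disjoint[symmetric, OF Qf(1)])
           (use Qf(3) in \<open>unfold disjoint_family_on_def disjoint_def EAB_def, blast\<close>)
      also have "\<Union>(EAB A ` Q) = EA A"
        using Qf(4) measurable_space[OF Y] by (auto simp: EAB_def EA_def)
      finally show "(\<Sum>B\<in>Q. f B x) = indicator (EA A) x" .
    qed
    have "AE x in M. real_cond_exp M G (\<lambda>x. \<Sum>B\<in>Q. f B x) x = (\<Sum>B\<in>Q. real_cond_exp M G (f B) x)"
      by (rule SG.real_cond_exp_sum[OF fi])
    then have "AE x in M. real_cond_exp M G (indicator (EA A)) x = (\<Sum>B\<in>Q. ce G (EAB A B) x)"
      unfolding fsum ce_def by (simp add: f_def)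
    then show ?thesis unfolding ce_def by (auto elim: AE_mp)
  qed
  have allb: "AE x in M. \<forall>A\<in>P. \<forall>B\<in>Q. (0 \<le> ce G (EAB A B) x \<and> ce G (EAB A B) x \<le> ce G (EA A) x \<and> ce G (EA A) x \<le> 1
       \<and> ce G (EAB A B) x \<le> c B) \<and> ce G (EB B) x = c B"
    using aeF[OF subG GH] Pf(1) Qf(1) by (intro eventually_ball_finite ballI) auto
  have allA: "AE x in M. \<forall>A\<in>P. (\<Sum>B\<in>Q. ce G (EAB A B) x) = ce G (EA A) x"
    using sumA Pf(1) by (intro eventually_ball_finite ballI) auto
  have nonneg: "AE x in M. 0 \<le> (\<Sum>A\<in>P. \<Sum>B\<in>Q. KG A B x)"
    using allb allA
  proof eventually_elim
    case (elim x)
    have "(\<Sum>A\<in>P. \<Sum>B\<in>Q. KG A B x) = (\<Sum>A\<in>P. \<Sum>B\<in>Q. kl_term (ce G (EAB A B) x) (ce G (EA A) x) (c B))"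
      using elim(1) by (intro sum.cong refl) (auto simp: KG_def)
    also have "0 \<le> \<dots>"
    proof (rule kl_sum_nonneg[where P=P and Q=Q])
      show "\<And>B. B \<in> Q \<Longrightarrow> 0 \<le> c B" by (simp add: c_def)
      show "(\<Sum>B\<in>Q. c B) = 1" by (rule sumc)
      show "0 \<le> ce G (EA A) x" if A: "A \<in> P" for A
      proof -
        have "0 \<le> (\<Sum>B\<in>Q. ce G (EAB A B) x)" using elim(1) A by (intro sum_nonneg) auto
        then show ?thesis using elim(2) A by simp
      qed
    qed (use elim in auto)
    finally show ?case .
  qed
  have "(\<integral>\<^sup>+ \<omega>. ennreal (\<Sum>A\<in>P. \<Sum>B\<in>Q. KG A B \<omega>) \<partial>M) = ennreal (\<integral>\<omega>. (\<Sum>A\<in>P. \<Sum>B\<in>Q. KG A B \<omega>) \<partial>M)"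
    by (rule nn_integral_eq_integral[OF iSG nonneg])
  also have "\<dots> \<le> ennreal (\<integral>\<omega>. (\<Sum>A\<in>P. \<Sum>B\<in>Q. KH A B \<omega>) \<partial>M)"
    by (rule ennreal_leI[OF intle])
  also have "\<dots> \<le> (\<integral>\<^sup>+ \<omega>. ennreal (\<Sum>A\<in>P. \<Sum>B\<in>Q. KH A B \<omega>) \<partial>M)"
    by (rule ennreal_int_le_nn[OF iSH])
  finally show ?thesis unfolding KG_def KH_def ce_def EA_def EB_def EAB_def .
qed



lemma prod3:
  assumes p1: "prob_space M1" and p2: "prob_space M2" and p3: "prob_space M3"
    and T[measurable]: "T \<in> sets (M1 \<Otimes>\<^sub>M M2)" and B[measurable]: "B \<in> sets M3"
  shows "emeasure (M1 \<Otimes>\<^sub>M (M2 \<Otimes>\<^sub>M M3)) {x \<in> space (M1 \<Otimes>\<^sub>M (M2 \<Otimes>\<^sub>M M3)). (fst x, fst (snd x)) \<in> T \<and> snd (snd x) \<in> B}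
    = emeasure (M1 \<Otimes>\<^sub>M M2) T * emeasure M3 B"
proof -
  interpret P1: prob_space M1 by (rule p1)
  interpret P2: prob_space M2 by (rule p2)
  interpret P3: prob_space M3 by (rule p3)
  interpret P23: prob_space "M2 \<Otimes>\<^sub>M M3" by (rule prob_space_pair[OF p2 p3])
  define C where "C = {x \<in> space (M1 \<Otimes>\<^sub>M (M2 \<Otimes>\<^sub>M M3)). (fst x, fst (snd x)) \<in> T \<and> snd (snd x) \<in> B}"
  have C[measurable]: "C \<in> sets (M1 \<Otimes>\<^sub>M (M2 \<Otimes>\<^sub>M M3))" unfolding C_def by measurable
  have "emeasure (M1 \<Otimes>\<^sub>M (M2 \<Otimes>\<^sub>M M3)) C = (\<integral>\<^sup>+x. emeasure (M2 \<Otimes>\<^sub>M M3) (Pair x -` C) \<partial>M1)"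
    by (rule P23.emeasure_pair_measure_alt[OF C])
  also have "\<dots> = (\<integral>\<^sup>+x. emeasure M2 (Pair x -` T) * emeasure M3 B \<partial>M1)"
  proof (rule nn_integral_cong)
    fix x assume x: "x \<in> space M1"
    have "Pair x -` C = (Pair x -` T) \<times> B"
      using x sets.sets_into_space[OF T] sets.sets_into_space[OF B]
      by (auto simp: C_def space_pair_measure)
    then show "emeasure (M2 \<Otimes>\<^sub>M M3) (Pair x -` C) = emeasure M2 (Pair x -` T) * emeasure M3 B"
      using P3.emeasure_pair_measure_Times[OF sets_Pair1[OF T] B] by simp
  qed
  also have "\<dots> = (\<integral>\<^sup>+x. emeasure M2 (Pair x -` T) \<partial>M1) * emeasure M3 B"
    by (rule nn_integral_multc) (rule P2.measurable_emeasure_Pair[OF T])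
  also have "(\<integral>\<^sup>+x. emeasure M2 (Pair x -` T) \<partial>M1) = emeasure (M1 \<Otimes>\<^sub>M M2) T"
    by (rule P2.emeasure_pair_measure_alt[OF T, symmetric])
  finally show ?thesis unfolding C_def .
qed



lemma ss_meas:
  fixes M :: "'a measure" and \<xi> :: "'z measure" and MW :: "'w measure"
    and K :: "(nat \<Rightarrow> 'z) \<Rightarrow> 'w measure" and n :: nat
    and Zm Zp :: "nat \<Rightarrow> 'a \<Rightarrow> 'z" and R :: "nat \<Rightarrow> 'a \<Rightarrow> int" and W :: "'a \<Rightarrow> 'w"
  assumes ps: "prob_space M" and px: "prob_space \<xi>"
    and Km[measurable]: "K \<in> measurable (PiM {1..n} (\<lambda>_. \<xi>)) (prob_algebra MW)"
    and Zmm[measurable]: "\<And>j. j \<in> {1..n} \<Longrightarrow> Zm j \<in> measurable M \<xi>"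
    and Zpm[measurable]: "\<And>j. j \<in> {1..n} \<Longrightarrow> Zp j \<in> measurable M \<xi>"
    and Rm[measurable]: "\<And>j. j \<in> {1..n} \<Longrightarrow> R j \<in> measurable M (count_space UNIV)"
    and Wm[measurable]: "W \<in> measurable M MW"
    and law: "distr M (PiM {1..n} (\<lambda>_. \<xi>) \<Otimes>\<^sub>M (PiM {1..n} (\<lambda>_. \<xi>) \<Otimes>\<^sub>M
                   (PiM {1..n} (\<lambda>_. rademacher) \<Otimes>\<^sub>M MW)))
           (\<lambda>\<omega>. (\<lambda>j\<in>{1..n}. Zm j \<omega>, \<lambda>j\<in>{1..n}. Zp j \<omega>, \<lambda>j\<in>{1..n}. R j \<omega>, W \<omega>))
         = supersample_law \<xi> MW K n"
    and T[measurable]: "T \<in> sets (PiM {1..n} (\<lambda>_. \<xi>) \<Otimes>\<^sub>M PiM {1..n} (\<lambda>_. \<xi>))"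
    and B[measurable]: "B \<in> sets (PiM {1..n} (\<lambda>_. rademacher))"
  shows "emeasure M {\<omega> \<in> space M. ((\<lambda>j\<in>{1..n}. Zm j \<omega>), (\<lambda>j\<in>{1..n}. Zp j \<omega>)) \<in> T \<and> (\<lambda>j\<in>{1..n}. R j \<omega>) \<in> B}
     = emeasure (PiM {1..n} (\<lambda>_. \<xi>) \<Otimes>\<^sub>M PiM {1..n} (\<lambda>_. \<xi>)) T * emeasure (PiM {1..n} (\<lambda>_. rademacher)) B"
proof -
  define Pz where "Pz = PiM {1..n} (\<lambda>_. \<xi>)"
  define Pr where "Pr = PiM {1..n} (\<lambda>_. rademacher)"
  define S where "S = Pz \<Otimes>\<^sub>M (Pz \<Otimes>\<^sub>M (Pr \<Otimes>\<^sub>M MW))"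
  define N where "N = Pz \<Otimes>\<^sub>M (Pz \<Otimes>\<^sub>M Pr)"
  define V where "V = (\<lambda>\<omega>. (\<lambda>j\<in>{1..n}. Zm j \<omega>, \<lambda>j\<in>{1..n}. Zp j \<omega>, \<lambda>j\<in>{1..n}. R j \<omega>, W \<omega>))"
  define tr where "tr = (\<lambda>x::(nat \<Rightarrow> 'z) \<times> (nat \<Rightarrow> 'z) \<times> (nat \<Rightarrow> int). train {1..n} (fst x) (fst (snd x)) (snd (snd x)))"
  define f where "f = (\<lambda>x::(nat \<Rightarrow> 'z) \<times> (nat \<Rightarrow> 'z) \<times> (nat \<Rightarrow> int). distr (K (tr x)) S (\<lambda>w. (fst x, fst (snd x), snd (snd x), w)))"
  define Ev where "Ev = {s \<in> space S. (fst s, fst (snd s)) \<in> T \<and> fst (snd (snd s)) \<in> B}"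
  define C where "C = {x \<in> space N. (fst x, fst (snd x)) \<in> T \<and> snd (snd x) \<in> B}"
  have rad_sets[simp]: "sets rademacher = UNIV" by (simp add: rademacher_def)
  have Rr[measurable]: "R j \<in> measurable M rademacher" if "j \<in> {1..n}" for j
    using Rm[OF that] by (subst measurable_cong_sets[OF refl, where N'="count_space UNIV"]) auto
  have Vm[measurable]: "V \<in> measurable M S"
    unfolding V_def S_def Pz_def Pr_def by measurable
  have trm[measurable]: "tr \<in> measurable N Pz"
    unfolding tr_def train_def Pz_def
  proof (rule measurable_restrict)
    fix j :: nat assume j: "j \<in> {1..n}"
    have c1: "(\<lambda>x. snd (snd x) j) \<in> measurable N rademacher"
      unfolding N_def Pz_def Pr_def using j by measurable
    have "{x \<in> space N. snd (snd x) j = 1} = (\<lambda>x. snd (snd x) j) -` {1} \<inter> space N" by auto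
    also have "\<dots> \<in> sets N" by (rule measurable_sets[OF c1]) simp
    finally have ps1: "{x \<in> space N. snd (snd x) j = 1} \<in> sets N" .
    show "(\<lambda>x. if snd (snd x) j = 1 then fst (snd x) j else fst x j) \<in> measurable N \<xi>"
      by (rule measurable_If[OF _ _ ps1]) (use j in \<open>unfold N_def Pz_def Pr_def, measurable\<close>)
  qed
  have Km'[measurable]: "K \<in> measurable Pz (prob_algebra MW)" unfolding Pz_def by (rule Km)
  have Ktm: "(\<lambda>x. K (tr x)) \<in> measurable N (prob_algebra MW)"
    by (rule measurable_compose[OF trm Km'])
  have fm: "f \<in> measurable N (subprob_algebra S)"
    unfolding f_def
  proof (rule measurable_distr2[where f="\<lambda>x w. (fst x, fst (snd x), snd (snd x), w)"])
    show "(\<lambda>(x, y). (fst x, fst (snd x), snd (snd x), y)) \<in> measurable (N \<Otimes>\<^sub>M MW) S"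
      unfolding N_def S_def by measurable
    show "(\<lambda>x. K (tr x)) \<in> measurable N (subprob_algebra MW)"
      by (rule measurable_prob_algebraD[OF Ktm])
  qed
  have psPz: "prob_space Pz" unfolding Pz_def by (intro prob_space_PiM px)
  have psPr: "prob_space Pr" unfolding Pr_def rademacher_def by (intro prob_space_PiM prob_space_measure_pmf)
  have psN: "prob_space N" unfolding N_def by (intro prob_space_pair psPz psPr)
  have Nne: "space N \<noteq> {}" using psN by (rule prob_space.not_empty)
  have Ev_sets: "Ev \<in> sets S" unfolding Ev_def S_def Pz_def Pr_def by measurable
  have C_sets: "C \<in> sets N" unfolding C_def N_def Pz_def Pr_def by measurable
  have Lf: "supersample_law \<xi> MW K n = N \<bind> f"
  proof -
    have "(\<lambda>(zm, zp, r). distr (K (train {1..n} zm zp r)) S (\<lambda>w. (zm, zp, r, w))) = f"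
      by (auto simp: fun_eq_iff f_def tr_def split: prod.splits)
    then show ?thesis unfolding supersample_law_def N_def S_def Pz_def Pr_def by simp
  qed
  have fx: "emeasure (f x) Ev = indicator C x" if x: "x \<in> space N" for x
  proof -
    have Kx: "K (tr x) \<in> space (prob_algebra MW)" using measurable_space[OF Ktm x] .
    then have sK: "sets (K (tr x)) = sets MW" and pK: "prob_space (K (tr x))"
      by (auto simp: space_prob_algebra)
    have spK: "space (K (tr x)) = space MW" using sets_eq_imp_space_eq[OF sK] .
    have x': "fst x \<in> space Pz" "fst (snd x) \<in> space Pz" "snd (snd x) \<in> space Pr"
      using x by (auto simp: N_def space_pair_measure)
    have hm: "(\<lambda>w. (fst x, fst (snd x), snd (snd x), w)) \<in> measurable (K (tr x)) S"
      unfolding measurable_cong_sets[OF sK refl] S_def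
      using x' by (intro measurable_Pair measurable_const measurable_ident) auto
    have "emeasure (f x) Ev = emeasure (K (tr x)) ((\<lambda>w. (fst x, fst (snd x), snd (snd x), w)) -` Ev \<inter> space (K (tr x)))"
      unfolding f_def by (rule emeasure_distr[OF hm Ev_sets])
    also have "(\<lambda>w. (fst x, fst (snd x), snd (snd x), w)) -` Ev \<inter> space (K (tr x))
        = (if (fst x, fst (snd x)) \<in> T \<and> snd (snd x) \<in> B then space (K (tr x)) else {})"
      using x' by (auto simp: Ev_def spK S_def space_pair_measure)
    also have "emeasure (K (tr x)) \<dots> = indicator C x"
      using x prob_space.emeasure_space_1[OF pK] by (auto simp: C_def)
    finally show ?thesis .
  qed
  have Vset: "{\<omega> \<in> space M. ((\<lambda>j\<in>{1..n}. Zm j \<omega>), (\<lambda>j\<in>{1..n}. Zp j \<omega>)) \<in> T \<and> (\<lambda>j\<in>{1..n}. R j \<omega>) \<in> B}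
      = V -` Ev \<inter> space M"
    using measurable_space[OF Vm] by (auto simp: V_def Ev_def)
  have "emeasure M {\<omega> \<in> space M. ((\<lambda>j\<in>{1..n}. Zm j \<omega>), (\<lambda>j\<in>{1..n}. Zp j \<omega>)) \<in> T \<and> (\<lambda>j\<in>{1..n}. R j \<omega>) \<in> B}
     = emeasure (distr M S V) Ev"
    unfolding Vset by (rule emeasure_distr[OF Vm Ev_sets, symmetric])
  also have "distr M S V = N \<bind> f"
    using law unfolding Lf[symmetric] S_def V_def Pz_def Pr_def .
  also have "emeasure (N \<bind> f) Ev = (\<integral>\<^sup>+x. emeasure (f x) Ev \<partial>N)"
    by (rule emeasure_bind[OF Nne fm Ev_sets])
  also have "\<dots> = (\<integral>\<^sup>+x. indicator C x \<partial>N)"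
    by (rule nn_integral_cong) (rule fx)
  also have "\<dots> = emeasure N C" by (rule nn_integral_indicator[OF C_sets])
  also have "\<dots> = emeasure (Pz \<Otimes>\<^sub>M Pz) T * emeasure Pr B"
    unfolding C_def N_def
    by (rule prod3[OF psPz psPz psPr]) (use T B in \<open>auto simp: Pz_def Pr_def\<close>)
  finally show ?thesis unfolding Pz_def Pr_def .
qed



theorem lemma2:
  fixes M :: "'a measure" and \<xi> :: "'z measure" and MW :: "'w measure"
    and K :: "(nat \<Rightarrow> 'z) \<Rightarrow> 'w measure" and n i :: nat
    and Zm Zp :: "nat \<Rightarrow> 'a \<Rightarrow> 'z" and R :: "nat \<Rightarrow> 'a \<Rightarrow> int" and W :: "'a \<Rightarrow> 'w"
  assumes "prob_space M" and "prob_space \<xi>"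
    and "K \<in> measurable (PiM {1..n} (\<lambda>_. \<xi>)) (prob_algebra MW)"
    and "\<And>j. j \<in> {1..n} \<Longrightarrow> Zm j \<in> measurable M \<xi>"
    and "\<And>j. j \<in> {1..n} \<Longrightarrow> Zp j \<in> measurable M \<xi>"
    and "\<And>j. j \<in> {1..n} \<Longrightarrow> R j \<in> measurable M (count_space UNIV)"
    and "W \<in> measurable M MW"
    and "distr M (PiM {1..n} (\<lambda>_. \<xi>) \<Otimes>\<^sub>M (PiM {1..n} (\<lambda>_. \<xi>) \<Otimes>\<^sub>M
                   (PiM {1..n} (\<lambda>_. rademacher) \<Otimes>\<^sub>M MW)))
           (\<lambda>\<omega>. (\<lambda>j\<in>{1..n}. Zm j \<omega>, \<lambda>j\<in>{1..n}. Zp j \<omega>, \<lambda>j\<in>{1..n}. R j \<omega>, W \<omega>))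
         = supersample_law \<xi> MW K n"
    and "i \<in> {1..n}"
  shows "cmi M MW (count_space UNIV) (\<xi> \<Otimes>\<^sub>M \<xi>) W (R i) (\<lambda>\<omega>. (Zm i \<omega>, Zp i \<omega>))
         \<le> cmi M MW (count_space UNIV) (PiM {1..n} (\<lambda>_. \<xi> \<Otimes>\<^sub>M \<xi>)) W (R i)
              (\<lambda>\<omega>. \<lambda>j\<in>{1..n}. (Zm j \<omega>, Zp j \<omega>))"
proof -
  note ps = assms(1) and px = assms(2)
  note [measurable] = assms(3-7)
  note law = assms(8) and i = assms(9)
  interpret prob_space M by (rule ps)
  define ZG where "ZG = (\<lambda>\<omega>. (Zm i \<omega>, Zp i \<omega>))"
  define ZH where "ZH = (\<lambda>\<omega>. \<lambda>j\<in>{1..n}. (Zm j \<omega>, Zp j \<omega>))"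
  define G where "G = vimage_algebra (space M) ZG (\<xi> \<Otimes>\<^sub>M \<xi>)"
  define H where "H = vimage_algebra (space M) ZH (PiM {1..n} (\<lambda>_. \<xi> \<Otimes>\<^sub>M \<xi>))"
  define Pz where "Pz = PiM {1..n} (\<lambda>_. \<xi>)"
  define Pr where "Pr = PiM {1..n} (\<lambda>_. rademacher)"
  have ZGm[measurable]: "ZG \<in> measurable M (\<xi> \<Otimes>\<^sub>M \<xi>)" unfolding ZG_def using i by measurable
  have ZHm[measurable]: "ZH \<in> measurable M (PiM {1..n} (\<lambda>_. \<xi> \<Otimes>\<^sub>M \<xi>))" unfolding ZH_def by measurable
  have subG: "subalgebra M G" unfolding G_def subalgebra_def
    using sets_image_in_sets[OF refl ZGm] by simp
  have subH: "subalgebra M H" unfolding H_def subalgebra_def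
    using sets_image_in_sets[OF refl ZHm] by simp
  have GH: "sets G \<subseteq> sets H"
  proof
    fix S assume "S \<in> sets G"
    then obtain A where A: "A \<in> sets (\<xi> \<Otimes>\<^sub>M \<xi>)" and S: "S = ZG -` A \<inter> space M"
      unfolding G_def using sets_vimage_algebra2[of ZG "space M" "\<xi> \<Otimes>\<^sub>M \<xi>"] measurable_space[OF ZGm] by auto
    have pim: "(\<lambda>f. f i) \<in> measurable (PiM {1..n} (\<lambda>_. \<xi> \<Otimes>\<^sub>M \<xi>)) (\<xi> \<Otimes>\<^sub>M \<xi>)"
      using i by measurable
    have A': "(\<lambda>f. f i) -` A \<inter> space (PiM {1..n} (\<lambda>_. \<xi> \<Otimes>\<^sub>M \<xi>)) \<in> sets (PiM {1..n} (\<lambda>_. \<xi> \<Otimes>\<^sub>M \<xi>))"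
      by (rule measurable_sets[OF pim A])
    have "S = ZH -` ((\<lambda>f. f i) -` A \<inter> space (PiM {1..n} (\<lambda>_. \<xi> \<Otimes>\<^sub>M \<xi>))) \<inter> space M"
      using measurable_space[OF ZHm] i by (auto simp: S ZG_def ZH_def)
    then show "S \<in> sets H" unfolding H_def using in_vimage_algebra[OF A'] by simp
  qed
  have ind: "measure M (A \<inter> {x \<in> space M. R i x \<in> B}) = measure M A * measure M {x \<in> space M. R i x \<in> B}"
    if A: "A \<in> sets H" for A B
  proof -
    obtain T where T: "T \<in> sets (PiM {1..n} (\<lambda>_. \<xi> \<Otimes>\<^sub>M \<xi>))" and AT: "A = ZH -` T \<inter> space M"
      using A unfolding H_def using sets_vimage_algebra2[of ZH "space M" "PiM {1..n} (\<lambda>_. \<xi> \<Otimes>\<^sub>M \<xi>)"] measurable_space[OF ZHm] by auto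
    define \<phi> where "\<phi> = (\<lambda>z::(nat \<Rightarrow> 'z) \<times> (nat \<Rightarrow> 'z). \<lambda>j\<in>{1..n}. (fst z j, snd z j))"
    have \<phi>m: "\<phi> \<in> measurable (Pz \<Otimes>\<^sub>M Pz) (PiM {1..n} (\<lambda>_. \<xi> \<Otimes>\<^sub>M \<xi>))"
      unfolding \<phi>_def Pz_def by measurable
    define T' where "T' = \<phi> -` T \<inter> space (Pz \<Otimes>\<^sub>M Pz)"
    have T'[measurable]: "T' \<in> sets (Pz \<Otimes>\<^sub>M Pz)" unfolding T'_def by (rule measurable_sets[OF \<phi>m T])
    have rad_sets[simp]: "sets rademacher = UNIV" by (simp add: rademacher_def)
    have cim: "(\<lambda>r. r i) \<in> measurable Pr rademacher" unfolding Pr_def using i by measurable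
    define B' where "B' = (\<lambda>r. r i) -` B \<inter> space Pr"
    have B'[measurable]: "B' \<in> sets Pr" unfolding B'_def by (rule measurable_sets[OF cim]) simp
    have psPz: "prob_space Pz" unfolding Pz_def by (intro prob_space_PiM px)
    have psPr: "prob_space Pr" unfolding Pr_def rademacher_def by (intro prob_space_PiM prob_space_measure_pmf)
    have psPP: "prob_space (Pz \<Otimes>\<^sub>M Pz)" by (intro prob_space_pair psPz)
    have key: "measure M {\<omega> \<in> space M. ((\<lambda>j\<in>{1..n}. Zm j \<omega>), (\<lambda>j\<in>{1..n}. Zp j \<omega>)) \<in> T1 \<and> (\<lambda>j\<in>{1..n}. R j \<omega>) \<in> B1}
      = measure (Pz \<Otimes>\<^sub>M Pz) T1 * measure Pr B1"
      if T1: "T1 \<in> sets (Pz \<Otimes>\<^sub>M Pz)" and B1: "B1 \<in> sets Pr" for T1 B1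
    proof -
      have e: "emeasure M {\<omega> \<in> space M. ((\<lambda>j\<in>{1..n}. Zm j \<omega>), (\<lambda>j\<in>{1..n}. Zp j \<omega>)) \<in> T1 \<and> (\<lambda>j\<in>{1..n}. R j \<omega>) \<in> B1}
        = emeasure (Pz \<Otimes>\<^sub>M Pz) T1 * emeasure Pr B1"
        unfolding Pz_def Pr_def
        by (rule ss_meas[OF ps px assms(3-7) law]) (use T1 B1 in \<open>auto simp: Pz_def Pr_def\<close>)
      show ?thesis
        unfolding measure_def e by (simp add: enn2real_mult)
    qed
    have sPP: "(\<lambda>j\<in>{1..n}. Zm j \<omega>, \<lambda>j\<in>{1..n}. Zp j \<omega>) \<in> space (Pz \<Otimes>\<^sub>M Pz)"
      and sPr: "(\<lambda>j\<in>{1..n}. R j \<omega>) \<in> space Pr" if "\<omega> \<in> space M" for \<omega>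
      using that measurable_space[OF assms(4)] measurable_space[OF assms(5)]
      by (auto simp: Pz_def Pr_def space_pair_measure space_PiM rademacher_def)
    have phiZ: "\<phi> (\<lambda>j\<in>{1..n}. Zm j \<omega>, \<lambda>j\<in>{1..n}. Zp j \<omega>) = ZH \<omega>" for \<omega>
      by (auto simp: \<phi>_def ZH_def fun_eq_iff)
    have s1: "A \<inter> {x \<in> space M. R i x \<in> B} = {\<omega> \<in> space M. ((\<lambda>j\<in>{1..n}. Zm j \<omega>), (\<lambda>j\<in>{1..n}. Zp j \<omega>)) \<in> T' \<and> (\<lambda>j\<in>{1..n}. R j \<omega>) \<in> B'}"
      using sPP sPr i by (auto simp: AT T'_def B'_def phiZ[simplified])
    have s2: "A = {\<omega> \<in> space M. ((\<lambda>j\<in>{1..n}. Zm j \<omega>), (\<lambda>j\<in>{1..n}. Zp j \<omega>)) \<in> T' \<and> (\<lambda>j\<in>{1..n}. R j \<omega>) \<in> space Pr}"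
      using sPP sPr i by (auto simp: AT T'_def phiZ[simplified])
    have s3: "{x \<in> space M. R i x \<in> B} = {\<omega> \<in> space M. ((\<lambda>j\<in>{1..n}. Zm j \<omega>), (\<lambda>j\<in>{1..n}. Zp j \<omega>)) \<in> space (Pz \<Otimes>\<^sub>M Pz) \<and> (\<lambda>j\<in>{1..n}. R j \<omega>) \<in> B'}"
      using sPP sPr i by (auto simp: B'_def)
    have m1: "measure (Pz \<Otimes>\<^sub>M Pz) (space (Pz \<Otimes>\<^sub>M Pz)) = 1" using psPP by (rule prob_space.prob_space)
    have m2: "measure Pr (space Pr) = 1" using psPr by (rule prob_space.prob_space)
    show ?thesis
      unfolding s1 using s2 s3 key[OF T' B'] key[OF T' sets.top] key[OF sets.top B'] m1 m2 by simp
  qed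
  have ind': "\<And>A B. A \<in> sets H \<Longrightarrow> B \<in> sets (count_space UNIV) \<Longrightarrow>
       measure M (A \<inter> {x \<in> space M. R i x \<in> B}) = measure M A * measure M {x \<in> space M. R i x \<in> B}"
    using ind by blast
  have "(SUP PQ \<in> {(P, Q). finite_meas_partition MW P \<and> finite_meas_partition (count_space UNIV) Q}.
        \<integral>\<^sup>+ \<omega>. ennreal (\<Sum>A\<in>fst PQ. \<Sum>B\<in>snd PQ.
            kl_term (real_cond_exp M G (indicator {x \<in> space M. W x \<in> A \<and> R i x \<in> B}) \<omega>)
                    (real_cond_exp M G (indicator {x \<in> space M. W x \<in> A}) \<omega>)
                    (real_cond_exp M G (indicator {x \<in> space M. R i x \<in> B}) \<omega>)) \<partial>M)
      \<le> (SUP PQ \<in> {(P, Q). finite_meas_partition MW P \<and> finite_meas_partition (count_space UNIV) Q}.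
        \<integral>\<^sup>+ \<omega>. ennreal (\<Sum>A\<in>fst PQ. \<Sum>B\<in>snd PQ.
            kl_term (real_cond_exp M H (indicator {x \<in> space M. W x \<in> A \<and> R i x \<in> B}) \<omega>)
                    (real_cond_exp M H (indicator {x \<in> space M. W x \<in> A}) \<omega>)
                    (real_cond_exp M H (indicator {x \<in> space M. R i x \<in> B}) \<omega>)) \<partial>M)"
  proof (rule SUP_mono)
    fix PQ :: "'w set set \<times> int set set" assume PQ: "PQ \<in> {(P, Q). finite_meas_partition MW P \<and> finite_meas_partition (count_space UNIV) Q}"
    obtain P Q where PQe: "PQ = (P, Q)" and P: "finite_meas_partition MW P"
      and Q: "finite_meas_partition (count_space UNIV) Q" using PQ by auto
    show "\<exists>m\<in>{(P, Q). finite_meas_partition MW P \<and> finite_meas_partition (count_space UNIV) Q}.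
        (\<integral>\<^sup>+ \<omega>. ennreal (\<Sum>A\<in>fst PQ. \<Sum>B\<in>snd PQ.
            kl_term (real_cond_exp M G (indicator {x \<in> space M. W x \<in> A \<and> R i x \<in> B}) \<omega>)
                    (real_cond_exp M G (indicator {x \<in> space M. W x \<in> A}) \<omega>)
                    (real_cond_exp M G (indicator {x \<in> space M. R i x \<in> B}) \<omega>)) \<partial>M)
      \<le> (\<integral>\<^sup>+ \<omega>. ennreal (\<Sum>A\<in>fst m. \<Sum>B\<in>snd m.
            kl_term (real_cond_exp M H (indicator {x \<in> space M. W x \<in> A \<and> R i x \<in> B}) \<omega>)
                    (real_cond_exp M H (indicator {x \<in> space M. W x \<in> A}) \<omega>)
                    (real_cond_exp M H (indicator {x \<in> space M. R i x \<in> B}) \<omega>)) \<partial>M)"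
      using PQ unfolding PQe
      by (intro bexI[of _ "(P, Q)"]) (auto intro!: core_term[OF ps subG subH GH assms(7) assms(6)[OF i] P Q ind'])
  qed
  then show ?thesis unfolding cmi_def cond_prob_def G_def H_def ZG_def ZH_def .
qed


end
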